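(* For every Noetherian commutative ring $R$, $\operatorname{nil}_\infty(R)=0$.
   Context: For a commutative ring $R$, the infinite nilradical is $\operatorname{nil}_\infty(R)=\bigcap_{\mathfrak p\in\operatorname{Spec}(R)}\bigcap_{n\in\mathbb{N}}\mathfrak p^n$. *)

theory Defs
  imports "HOL-Algebra.Ideal_Product" "HOL-Algebra.Ring_Divisibility"
begin

primrec ideal_pow :: "('a, 'b) ring_scheme \<Rightarrow> 'a set \<Rightarrow> nat \<Rightarrow> 'a set" where
  "ideal_pow R I 0 = carrier R"
| "ideal_pow R I (Suc n) = ideal_prod R I (ideal_pow R I n)"

text \<open>Infinite nilradical: intersection of all powers of all prime ideals (as a subset of R;
  intersecting with the carrier gives the conventional value R for the empty family).\<close>
definition nil_infty :: "('a, 'b) ring_scheme \<Rightarrow> 'a set" where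
  "nil_infty R = carrier R \<inter> (\<Inter>P\<in>{P. primeideal P R}. \<Inter>n. ideal_pow R P n)"

end

theory Submission
  imports Defs
begin

context cring
begin

lemma ideal_pow_ideal: "ideal J R \<Longrightarrow> ideal (ideal_pow R J n) R"
  by (induction n) (simp_all add: oneideal ideal_prod_is_ideal)

lemma ideal_pow_carrier: "ideal J R \<Longrightarrow> ideal_pow R J n \<subseteq> carrier R"
  using ideal.Icarr[OF ideal_pow_ideal] by blast

lemma ideal_prod_mono:
  assumes "X \<subseteq> X'" "Y \<subseteq> Y'"
  shows "ideal_prod R X Y \<subseteq> ideal_prod R X' Y'"
proof
  fix s assume "s \<in> ideal_prod R X Y" thus "s \<in> ideal_prod R X' Y'"
  proof (induct s rule: ideal_prod.induct)
    case (prod i j) thus ?case using assms by (blast intro: ideal_prod.prod)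
  next
    case (sum s1 s2) show ?case using sum(2,4) by (rule ideal_prod.sum)
  qed
qed

lemma ideal_pow_mono: "X \<subseteq> Y \<Longrightarrow> ideal_pow R X n \<subseteq> ideal_pow R Y n"
  by (induction n) (simp_all add: ideal_prod_mono)

definition colon :: "'a set \<Rightarrow> 'a set \<Rightarrow> 'a set" where
  "colon I J = {r \<in> carrier R. \<forall>j\<in>J. r \<otimes> j \<in> I}"

lemma colon_ideal:
  assumes "ideal I R" "J \<subseteq> carrier R"
  shows "ideal (colon I J) R"
proof (rule idealI)
  show "ring R" by (rule ring_axioms)
  show "subgroup (colon I J) (add_monoid R)"
  proof
    show "colon I J \<subseteq> carrier (add_monoid R)" by (auto simp: colon_def)
    show "\<one>\<^bsub>add_monoid R\<^esub> \<in> colon I J"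
      using assms by (auto simp: colon_def additive_subgroup.zero_closed ideal.axioms(1) subsetD)
    fix x y assume x: "x \<in> colon I J" and y: "y \<in> colon I J"
    show "x \<otimes>\<^bsub>add_monoid R\<^esub> y \<in> colon I J"
    proof -
      have "\<forall>j\<in>J. (x \<oplus> y) \<otimes> j \<in> I"
      proof
        fix j assume j: "j \<in> J"
        have "(x \<oplus> y) \<otimes> j = x \<otimes> j \<oplus> y \<otimes> j"
          using x y j assms(2) by (auto simp: colon_def l_distr)
        thus "(x \<oplus> y) \<otimes> j \<in> I" using x y j assms(1)
          by (simp add: colon_def additive_subgroup.a_closed ideal.axioms(1))
      qed
      thus ?thesis using x y by (auto simp: colon_def)
    qed
    show "inv\<^bsub>add_monoid R\<^esub> x \<in> colon I J"
    proof -
      have "\<forall>j\<in>J. (\<ominus> x) \<otimes> j \<in> I"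
      proof
        fix j assume j: "j \<in> J"
        have "(\<ominus> x) \<otimes> j = \<ominus> (x \<otimes> j)"
          using x j assms(2) by (auto simp: colon_def l_minus)
        thus "(\<ominus> x) \<otimes> j \<in> I" using x j assms(1)
          by (simp add: colon_def additive_subgroup.a_inv_closed ideal.axioms(1))
      qed
      thus ?thesis using x by (auto simp: colon_def a_inv_def[symmetric])
    qed
  qed
next
  fix a x assume a: "a \<in> colon I J" and x: "x \<in> carrier R"
  show xa: "x \<otimes> a \<in> colon I J"
    using a x assms by (auto simp: colon_def m_assoc ideal.I_l_closed subsetD)
  have "a \<otimes> x = x \<otimes> a" using a x by (simp add: colon_def m_comm)
  then show "a \<otimes> x \<in> colon I J" using xa by simp
qed


lemma I_sub_colon: "ideal I R \<Longrightarrow> J \<subseteq> carrier R \<Longrightarrow> I \<subseteq> colon I J"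
  by (auto simp: colon_def ideal.I_r_closed ideal.Icarr subsetD)

lemma prod_sub_colon:
  assumes I: "ideal I R" and J: "ideal J R" and X: "ideal X R" and sub: "X \<subseteq> colon I J"
  shows "ideal_prod R J X \<subseteq> I"
proof
  fix s assume "s \<in> ideal_prod R J X" thus "s \<in> I"
  proof (induct s rule: ideal_prod.induct)
    case (prod i j)
    have "j \<otimes> i \<in> I" using prod sub by (auto simp: colon_def)
    moreover have "i \<otimes> j = j \<otimes> i"
      using prod ideal.Icarr[OF J] ideal.Icarr[OF X] m_comm by blast
    ultimately show ?case by simp
  next
    case (sum s1 s2) thus ?case
      using I by (simp add: additive_subgroup.a_closed ideal.axioms(1))
  qed
qed

lemma colon_of_prod:
  assumes I: "ideal I R" and J: "ideal J R" and X: "ideal X R" and sub: "ideal_prod R J X \<subseteq> I"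
  shows "X \<subseteq> colon I J"
proof
  fix r assume r: "r \<in> X"
  have "\<forall>j\<in>J. r \<otimes> j \<in> I"
  proof
    fix j assume j: "j \<in> J"
    have "j \<otimes> r \<in> I" using ideal_prod.prod[OF j r, of R] sub by blast
    moreover have "r \<otimes> j = j \<otimes> r"
      using r j ideal.Icarr[OF J] ideal.Icarr[OF X] m_comm by blast
    ultimately show "r \<otimes> j \<in> I" by simp
  qed
  thus "r \<in> colon I J" using r ideal.Icarr[OF X] by (auto simp: colon_def)
qed

lemma set_add_sub:
  assumes "ideal I R" "A \<subseteq> I" "B \<subseteq> I"
  shows "set_add R A B \<subseteq> I"
proof
  fix s assume "s \<in> set_add R A B"
  then obtain a b where "a \<in> A" "b \<in> B" "s = a \<oplus> b"
    unfolding set_add_def' by blast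
  moreover have "a \<in> I" "b \<in> I" using assms \<open>a \<in> A\<close> \<open>b \<in> B\<close> by auto
  ultimately show "s \<in> I" using assms(1) by (simp add: additive_subgroup.a_closed ideal.axioms(1))
qed

lemma sum_nil:
  "ideal J R \<Longrightarrow> ideal K R \<Longrightarrow> ideal I R \<Longrightarrow> a + b = n \<Longrightarrow> ideal_pow R J a \<subseteq> I
   \<Longrightarrow> ideal_pow R K b \<subseteq> I \<Longrightarrow> ideal_pow R (set_add R J K) n \<subseteq> I"
proof (induction n arbitrary: a b I)
  case 0
  then show ?case by simp
next
  case (Suc n)
  have JK: "ideal (set_add R J K) R" using add_ideals[OF Suc.prems(1,2)] .
  show ?case
  proof (cases "a = 0 \<or> b = 0")
    case True
    hence "carrier R \<subseteq> I" using Suc.prems by auto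
    thus ?thesis using ideal_pow_carrier[OF JK] by blast
  next
    case False
    then obtain a' b' where a: "a = Suc a'" and b: "b = Suc b'" by (meson not0_implies_Suc)
    define X where "X = ideal_pow R (set_add R J K) n"
    have X: "ideal X R" unfolding X_def using ideal_pow_ideal[OF JK] .
    have J': "J \<subseteq> carrier R" "K \<subseteq> carrier R"
      using ideal.Icarr[OF Suc.prems(1)] ideal.Icarr[OF Suc.prems(2)] by blast+
    have cJ: "ideal (colon I J) R" "ideal (colon I K) R"
      using colon_ideal[OF Suc.prems(3) J'(1)] colon_ideal[OF Suc.prems(3) J'(2)] by auto
    have "ideal_pow R J a' \<subseteq> colon I J"
      using colon_of_prod[OF Suc.prems(3,1) ideal_pow_ideal[OF Suc.prems(1)]] Suc.prems(5) a by simp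
    moreover have "ideal_pow R K b \<subseteq> colon I J"
      using I_sub_colon[OF Suc.prems(3) J'(1)] Suc.prems(6) by blast
    ultimately have "X \<subseteq> colon I J"
      using Suc.IH[OF Suc.prems(1,2) cJ(1), of a' b] Suc.prems(4) a unfolding X_def by simp
    hence 1: "ideal_prod R J X \<subseteq> I" using prod_sub_colon[OF Suc.prems(3,1) X] by blast
    have "ideal_pow R K b' \<subseteq> colon I K"
      using colon_of_prod[OF Suc.prems(3,2) ideal_pow_ideal[OF Suc.prems(2)]] Suc.prems(6) b by simp
    moreover have "ideal_pow R J a \<subseteq> colon I K"
      using I_sub_colon[OF Suc.prems(3) J'(2)] Suc.prems(5) by blast
    ultimately have "X \<subseteq> colon I K"
      using Suc.IH[OF Suc.prems(1,2) cJ(2), of a b'] Suc.prems(4) b unfolding X_def by simp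
    hence 2: "ideal_prod R K X \<subseteq> I" using prod_sub_colon[OF Suc.prems(3,2) X] by blast
    have "ideal_pow R (set_add R J K) (Suc n) = ideal_prod R J X <+> ideal_prod R K X"
      unfolding X_def using ideal_prod_distr(2)[OF ideal_pow_ideal[OF JK] Suc.prems(1,2)] by simp
    thus ?thesis using set_add_sub[OF Suc.prems(3) 1 2] by simp
  qed
qed


lemma pidl_pow:
  assumes a: "a \<in> carrier R"
  shows "ideal_pow R (PIdl a) k \<subseteq> PIdl (a [^] k)"
proof (induction k)
  case 0
  show ?case
  proof
    fix y assume "y \<in> ideal_pow R (PIdl a) 0"
    hence y: "y \<in> carrier R" by simp
    hence "y = y \<otimes> (a [^] (0::nat))" by simp
    thus "y \<in> PIdl (a [^] (0::nat))" using y unfolding cgenideal_def by blast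
  qed
next
  case (Suc k)
  have ak: "a [^] k \<in> carrier R" using a by simp
  have "ideal_pow R (PIdl a) (Suc k) \<subseteq> ideal_prod R (PIdl a) (PIdl (a [^] k))"
    using ideal_prod_mono[OF subset_refl Suc.IH] by simp
  also have "\<dots> = Idl (PIdl a <#> PIdl (a [^] k))"
    using ideal_prod_eq_genideal[OF cgenideal_ideal[OF a] cgenideal_ideal[OF ak]] .
  also have "\<dots> = Idl (PIdl (a \<otimes> a [^] k))"
    using cgenideal_prod[OF a ak] by simp
  also have "\<dots> \<subseteq> PIdl (a \<otimes> a [^] k)"
    using genideal_minimal[OF cgenideal_ideal[of "a \<otimes> a [^] k"]] a ak by blast
  also have "a \<otimes> a [^] k = a [^] Suc k" using a ak by (simp add: m_comm)
  finally show ?case .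
qed

lemma fg_nil:
  "finite A \<Longrightarrow> A \<subseteq> carrier R \<Longrightarrow> ideal I R \<Longrightarrow> (\<forall>a\<in>A. \<exists>k. a [^] (k::nat) \<in> I)
   \<Longrightarrow> \<exists>m. ideal_pow R (Idl A) m \<subseteq> I"
proof (induction A rule: finite_induct)
  case empty
  have "Idl {} \<subseteq> {\<zero>}" using genideal_minimal[OF zeroideal] by blast
  hence "ideal_pow R (Idl {}) 1 \<subseteq> ideal_pow R {\<zero>} 1" by (rule ideal_pow_mono)
  also have "\<dots> = {\<zero>}" using ideal_prod_one[OF zeroideal] by simp
  also have "\<dots> \<subseteq> I" using empty.prems(2)
    by (simp add: additive_subgroup.zero_closed ideal.axioms(1))
  finally show ?case by blast
next
  case (insert a B)
  have a: "a \<in> carrier R" and B: "B \<subseteq> carrier R" using insert.prems by auto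
  obtain m where m: "ideal_pow R (Idl B) m \<subseteq> I" using insert by auto
  obtain k :: nat where k: "a [^] k \<in> I" using insert.prems by auto
  have "ideal_pow R (PIdl a) k \<subseteq> I"
    using pidl_pow[OF a, of k] cgenideal_minimal[OF insert.prems(2) k] by blast
  hence S: "ideal_pow R (set_add R (PIdl a) (Idl B)) (k + m) \<subseteq> I"
    using sum_nil[OF cgenideal_ideal[OF a] genideal_ideal[OF B] insert.prems(2) refl _ m] by blast
  have idB: "ideal (Idl B) R" using genideal_ideal[OF B] .
  have z: "\<zero> \<in> Idl B" using idB by (simp add: additive_subgroup.zero_closed ideal.axioms(1))
  have z': "\<zero> \<in> PIdl a" using cgenideal_ideal[OF a]
    by (simp add: additive_subgroup.zero_closed ideal.axioms(1))
  have aP: "a \<in> PIdl a" using cgenideal_self[OF a] .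
  have "insert a B \<subseteq> set_add R (PIdl a) (Idl B)"
  proof
    fix y assume y: "y \<in> insert a B"
    show "y \<in> set_add R (PIdl a) (Idl B)"
    proof (cases "y = a")
      case True
      hence "y = a \<oplus> \<zero>" using a by simp
      thus ?thesis using aP z unfolding set_add_def' by blast
    next
      case False
      hence yB: "y \<in> B" using y by simp
      hence "y = \<zero> \<oplus> y" using B by auto
      moreover have "y \<in> Idl B" using genideal_self[OF B] yB by blast
      ultimately show ?thesis using z' unfolding set_add_def' by blast
    qed
  qed
  hence "Idl (insert a B) \<subseteq> set_add R (PIdl a) (Idl B)"
    using genideal_minimal[OF add_ideals[OF cgenideal_ideal[OF a] idB]] by blast
  hence "ideal_pow R (Idl (insert a B)) (k + m) \<subseteq> I"
    using ideal_pow_mono S by blast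
  thus ?case by blast
qed


lemma ext_lemma:
  assumes I: "ideal I R" and a: "a \<in> carrier R" "a \<notin> I" and x: "x \<in> carrier R"
    and mx: "\<forall>J. ideal J R \<and> I \<subseteq> J \<and> x \<notin> J \<longrightarrow> J = I"
  shows "\<exists>i\<in>I. \<exists>s\<in>carrier R. x = i \<oplus> s \<otimes> a"
proof -
  define K where "K = set_add R I (PIdl a)"
  have K: "ideal K R" unfolding K_def using add_ideals[OF I cgenideal_ideal[OF a(1)]] .
  have z: "\<zero> \<in> PIdl a" using cgenideal_ideal[OF a(1)]
    by (simp add: additive_subgroup.zero_closed ideal.axioms(1))
  have zI: "\<zero> \<in> I" using I by (simp add: additive_subgroup.zero_closed ideal.axioms(1))
  have "I \<subseteq> K"
  proof
    fix i assume i: "i \<in> I"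
    hence "i = i \<oplus> \<zero>" using ideal.Icarr[OF I i] by simp
    thus "i \<in> K" using i z unfolding K_def set_add_def' by blast
  qed
  moreover have "a \<in> K"
  proof -
    have "a = \<zero> \<oplus> a" using a by simp
    thus ?thesis using zI cgenideal_self[OF a(1)] unfolding K_def set_add_def' by blast
  qed
  ultimately have "x \<in> K" using mx K a(2) by blast
  then obtain i k where ik: "i \<in> I" "k \<in> PIdl a" "x = i \<oplus> k"
    unfolding K_def set_add_def' by blast
  then obtain s where "s \<in> carrier R" "k = s \<otimes> a" unfolding cgenideal_def by blast
  thus ?thesis using ik by blast
qed

lemma main_lemma:
  assumes noeth: "noetherian_ring R" and x: "x \<in> carrier R" "x \<noteq> \<zero>"
  shows "\<exists>P n. primeideal P R \<and> x \<notin> ideal_pow R P n"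
proof -
  interpret noetherian_ring R by (rule noeth)
  define F where "F = {J. ideal J R \<and> x \<notin> J}"
  have "\<exists>M\<in>F. \<forall>X\<in>F. M \<subseteq> X \<longrightarrow> X = M"
  proof (rule subset_Zorn_nonempty)
    show "F \<noteq> {}" using zeroideal x unfolding F_def by blast
  next
    fix C assume C: "C \<noteq> {}" "subset.chain F C"
    hence "subset.chain {I. ideal I R} C"
      unfolding F_def pred_on.chain_def by blast
    hence "\<Union>C \<in> C" using ideal_chain_is_trivial[OF C(1)] by blast
    thus "\<Union>C \<in> F" using C(2) unfolding pred_on.chain_def by blast
  qed
  then obtain I where I: "ideal I R" "x \<notin> I"
    and mx: "\<forall>J. ideal J R \<and> I \<subseteq> J \<and> x \<notin> J \<longrightarrow> J = I"
    unfolding F_def by blast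
  define P where "P = colon I {x}"
  have xs: "{x} \<subseteq> carrier R" using x by simp
  have Pid: "ideal P R" unfolding P_def using colon_ideal[OF I(1) xs] .
  have memP: "r \<in> P \<longleftrightarrow> r \<in> carrier R \<and> r \<otimes> x \<in> I" for r
    unfolding P_def colon_def by simp
  have prime: "primeideal P R"
  proof (rule primeidealI[OF Pid is_cring])
    show "carrier R \<noteq> P" using memP[of \<one>] x I by auto
  next
    fix a b assume a: "a \<in> carrier R" and b: "b \<in> carrier R" and ab: "a \<otimes> b \<in> P"
    show "a \<in> P \<or> b \<in> P"
    proof (cases "a \<in> P")
      case False
      hence "a \<otimes> x \<notin> I" using memP a by blast
      moreover have ax: "a \<otimes> x \<in> carrier R" using a x by simp
      ultimately obtain i s where hs: "i \<in> I" "s \<in> carrier R" "x = i \<oplus> s \<otimes> (a \<otimes> x)"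
        using ext_lemma[OF I(1) ax _ x(1) mx] by blast
      have ic: "i \<in> carrier R" using ideal.Icarr[OF I(1) hs(1)] .
      from hs(3) have "b \<otimes> x = b \<otimes> (i \<oplus> s \<otimes> (a \<otimes> x))" by (rule arg_cong)
      also have "\<dots> = b \<otimes> i \<oplus> s \<otimes> ((a \<otimes> b) \<otimes> x)"
        using ic hs(2) a b x(1) by algebra
      finally have "b \<otimes> x = b \<otimes> i \<oplus> s \<otimes> ((a \<otimes> b) \<otimes> x)" .
      moreover have "b \<otimes> i \<in> I" using ideal.I_l_closed[OF I(1) hs(1) b] .
      moreover have "s \<otimes> ((a \<otimes> b) \<otimes> x) \<in> I"
        using ideal.I_l_closed[OF I(1) _ hs(2)] ab memP by blast
      ultimately have "b \<otimes> x \<in> I" using I(1)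
        by (simp add: additive_subgroup.a_closed ideal.axioms(1))
      thus ?thesis using memP b by blast
    qed simp
  qed
  have nil: "\<exists>N::nat. p [^] N \<in> I" if p: "p \<in> P" for p
  proof -
    have pc: "p \<in> carrier R" and px: "p \<otimes> x \<in> I" using p memP by auto
    define Cn where "Cn n = colon I {p [^] (n::nat)}" for n
    have Cid: "ideal (Cn n) R" for n
      unfolding Cn_def using colon_ideal[OF I(1)] pc by simp
    have Cmem: "s \<in> Cn n \<longleftrightarrow> s \<in> carrier R \<and> s \<otimes> p [^] n \<in> I" for s n
      unfolding Cn_def colon_def by simp
    have Cmono: "Cn n \<subseteq> Cn (Suc n)" for n
    proof
      fix s assume "s \<in> Cn n"
      hence s: "s \<in> carrier R" "s \<otimes> p [^] n \<in> I" using Cmem by auto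
      have "s \<otimes> p [^] Suc n = (s \<otimes> p [^] n) \<otimes> p" using s pc by (simp add: m_assoc)
      moreover have "(s \<otimes> p [^] n) \<otimes> p \<in> I" using ideal.I_r_closed[OF I(1) s(2) pc] .
      ultimately show "s \<in> Cn (Suc n)" using Cmem s by simp
    qed
    have Cle: "m \<le> n \<Longrightarrow> Cn m \<subseteq> Cn n" for m n
      using lift_Suc_mono_le[of Cn, OF Cmono] by blast
    have "subset.chain {I. ideal I R} (range Cn)"
      unfolding pred_on.chain_def using Cid Cle nat_le_linear by blast
    hence "\<Union>(range Cn) \<in> range Cn" using ideal_chain_is_trivial by blast
    then obtain N where N: "\<Union>(range Cn) = Cn N" by blast
    hence CSN: "Cn (Suc N) \<subseteq> Cn N" by blast
    show ?thesis
    proof (rule ccontr)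
      assume "\<not> ?thesis"
      hence "p [^] N \<notin> I" by blast
      moreover have pN: "p [^] N \<in> carrier R" using pc by simp
      ultimately obtain i s where hs: "i \<in> I" "s \<in> carrier R" "x = i \<oplus> s \<otimes> p [^] N"
        using ext_lemma[OF I(1) pN _ x(1) mx] by blast
      have ic: "i \<in> carrier R" using ideal.Icarr[OF I(1) hs(1)] .
      have pi: "p \<otimes> i \<in> I" using ideal.I_l_closed[OF I(1) hs(1) pc] .
      from hs(3) have "p \<otimes> x = p \<otimes> (i \<oplus> s \<otimes> p [^] N)" by (rule arg_cong)
      moreover have "s \<otimes> (p [^] N \<otimes> p) = p \<otimes> (i \<oplus> s \<otimes> p [^] N) \<oplus> \<ominus> (p \<otimes> i)"
        using ic hs(2) pc pN by algebra
      ultimately have "s \<otimes> p [^] Suc N = p \<otimes> x \<oplus> \<ominus> (p \<otimes> i)" by simp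
      moreover have "p \<otimes> x \<oplus> \<ominus> (p \<otimes> i) \<in> I" using px pi I(1)
        by (simp add: additive_subgroup.a_closed additive_subgroup.a_inv_closed ideal.axioms(1))
      ultimately have "s \<in> Cn (Suc N)" using Cmem hs(2) by simp
      hence "s \<otimes> p [^] N \<in> I" using CSN Cmem by blast
      hence "x \<in> I" using hs(1,3) I(1) by (simp add: additive_subgroup.a_closed ideal.axioms(1))
      thus False using I(2) by blast
    qed
  qed
  obtain A where A: "A \<subseteq> carrier R" "finite A" "P = Idl A" using finetely_gen[OF Pid] by blast
  have "A \<subseteq> P" using genideal_self[OF A(1)] A(3) by simp
  hence "\<forall>a\<in>A. \<exists>k::nat. a [^] k \<in> I" using nil by blast
  then obtain m where "ideal_pow R (Idl A) m \<subseteq> I" using fg_nil[OF A(2,1) I(1)] by blast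
  hence "x \<notin> ideal_pow R P m" using A(3) I(2) by blast
  thus ?thesis using prime by blast
qed

end

theorem proposition4p5:
  fixes R (structure)
  assumes "cring R" and "noetherian_ring R"
  shows "nil_infty R = {\<zero>}"
proof -
  interpret cring R by fact
  show ?thesis
  proof
    show "nil_infty R \<subseteq> {\<zero>}"
    proof
      fix y assume y: "y \<in> nil_infty R"
      show "y \<in> {\<zero>}"
      proof (rule ccontr)
        assume "y \<notin> {\<zero>}"
        moreover have "y \<in> carrier R" using y unfolding nil_infty_def by blast
        ultimately obtain P n where "primeideal P R" "y \<notin> ideal_pow R P n"
          using main_lemma[OF assms(2)] by blast
        thus False using y unfolding nil_infty_def by blast
      qed
    qed
  next
    have "\<zero> \<in> ideal_pow R P n" if "primeideal P R" for P n
      using ideal_pow_ideal[OF primeideal.axioms(1)[OF that]]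
      by (simp add: additive_subgroup.zero_closed ideal.axioms(1))
    thus "{\<zero>} \<subseteq> nil_infty R" unfolding nil_infty_def by auto
  qed
qed

end
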